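(* Let $X$ be a complete separable metric space, $\Sigma$ a compact Hausdorff group with Haar probability measure $\mu_\Sigma$ acting measurably on $X$ via $T_\sigma$, and $\Gamma\subset C_b(X)$. 1. If $\Gamma$ is admissible then $\Gamma^{\mathrm{inv}}_\Sigma$ is admissible. 2. If $\Gamma$ is strictly admissible and $S_\Sigma[\Gamma]\subset\Gamma$ then $\Gamma^{\mathrm{inv}}_\Sigma$ is $\Sigma$-strictly admissible.
   Context: $C_b(X)$: bounded continuous functions. $S_\Sigma[\gamma](x)=\int_\Sigma\gamma(T_\sigma(x))\mu_\Sigma(d\sigma)$; $\Gamma^{\mathrm{inv}}_\Sigma=\{\gamma\in\Gamma:\gamma\circ T_\sigma=\gamma\ \forall\sigma\}$; $\mathcal{P}_\Sigma(X)$ is the set of probability measures $P$ with $P\circ T_\sigma^{-1}=P$ for all $\sigma$. For $\mathcal{Q}\subset\mathcal{P}(X)$, a set $\Psi\subset\mathcal{M}_b(X)$ is $\mathcal{Q}$-determining if for $Q,P\in\mathcal{Q}$, $E_Q[\psi]=E_P[\psi]$ for all $\psi\in\Psi$ implies $Q=P$. The $M(X)$-topology on $C_b(X)$ is the weakest topology making $\gamma\mapsto\int\gamma d\nu$ continuous for every finite signed measure $\nu$. $\Gamma\subset C_b(X)$ is admissible if $0\in\Gamma$, $\Gamma$ is convex, and $\Gamma$ is closed in the $M(X)$-topology; strictly admissible if moreover there is a $\mathcal{P}(X)$-determining $\Psi\subset C_b(X)$ such that for each $\psi\in\Psi$ there are $c\in\mathbb{R}$, $\epsilon>0$ with $c\pm\epsilon\psi\in\Gamma$.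 An admissible $\Gamma\subset C_b(X)$ consisting of $\Sigma$-invariant functions is $\Sigma$-strictly admissible if there is a $\mathcal{P}_\Sigma(X)$-determining $\Psi\subset C_b(X)$ such that for each $\psi\in\Psi$ there are $c\in\mathbb{R}$, $\epsilon>0$ with $c\pm\epsilon\psi\in\Gamma$. *)

theory Defs
  imports "HOL-Probability.Probability" "HOL-Algebra.Group"
begin

definition Cb :: "('x::topological_space \<Rightarrow> real) set" where
  "Cb = {f. continuous_on UNIV f \<and> bounded (range f)}"

text \<open>A finite signed Borel measure is represented by its Jordan decomposition,
  i.e. as a difference nu = M1 - M2 of two finite (nonnegative) Borel measures.\<close>

definition finite_borel_measure :: "'x::topological_space measure \<Rightarrow> bool" where
  "finite_borel_measure M \<longleftrightarrow> sets M = sets (borel :: 'x measure) \<and> finite_measure M"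

definition signed_integral :: "('x measure \<times> 'x measure) \<Rightarrow> ('x \<Rightarrow> real) \<Rightarrow> real" where
  "signed_integral nu f = (\<integral>x. f x \<partial>(fst nu)) - (\<integral>x. f x \<partial>(snd nu))"

definition finite_signed_measure :: "('x::topological_space measure \<times> 'x measure) \<Rightarrow> bool" where
  "finite_signed_measure nu \<longleftrightarrow> finite_borel_measure (fst nu) \<and> finite_borel_measure (snd nu)"

definition MX_topology :: "('x::topological_space \<Rightarrow> real) topology" where
  "MX_topology = topology_generated_by
     {{g \<in> Cb. signed_integral nu g \<in> U} | nu U. finite_signed_measure nu \<and> open U}"

definition admissible :: "('x::topological_space \<Rightarrow> real) set \<Rightarrow> bool" where
  "admissible \<Gamma> \<longleftrightarrow> \<Gamma> \<subseteq> Cb \<and> (\<lambda>x. 0) \<in> \<Gamma>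
     \<and> (\<forall>g1\<in>\<Gamma>. \<forall>g2\<in>\<Gamma>. \<forall>t::real. 0 \<le> t \<and> t \<le> 1 \<longrightarrow> (\<lambda>x. t * g1 x + (1 - t) * g2 x) \<in> \<Gamma>)
     \<and> closedin MX_topology \<Gamma>"

definition prob_measures :: "'x::topological_space measure set" where
  "prob_measures = {P. sets P = sets (borel :: 'x measure) \<and> prob_space P}"

definition determining :: "'x measure set \<Rightarrow> ('x \<Rightarrow> real) set \<Rightarrow> bool" where
  "determining Q \<Psi> \<longleftrightarrow>
     (\<forall>P1\<in>Q. \<forall>P2\<in>Q. (\<forall>\<psi>\<in>\<Psi>. (\<integral>x. \<psi> x \<partial>P1) = (\<integral>x. \<psi> x \<partial>P2)) \<longrightarrow> P1 = P2)"

definition strictly_admissible :: "('x::topological_space \<Rightarrow> real) set \<Rightarrow> bool" where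
  "strictly_admissible \<Gamma> \<longleftrightarrow> admissible \<Gamma> \<and>
     (\<exists>\<Psi>. \<Psi> \<subseteq> Cb \<and> determining prob_measures \<Psi> \<and>
        (\<forall>\<psi>\<in>\<Psi>. \<exists>c \<epsilon>. \<epsilon> > 0 \<and> (\<lambda>x. c + \<epsilon> * \<psi> x) \<in> \<Gamma> \<and> (\<lambda>x. c - \<epsilon> * \<psi> x) \<in> \<Gamma>))"

definition borel_of :: "'a topology \<Rightarrow> 'a measure" where
  "borel_of T = sigma (topspace T) {U. openin T U}"

definition compact_hausdorff_group :: "('s, 'm) monoid_scheme \<Rightarrow> 's topology \<Rightarrow> bool" where
  "compact_hausdorff_group G T \<longleftrightarrow> group G \<and> topspace T = carrier G
     \<and> compact_space T \<and> Hausdorff_space T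
     \<and> continuous_map (prod_topology T T) T (\<lambda>(a, b). a \<otimes>\<^bsub>G\<^esub> b)
     \<and> continuous_map T T (\<lambda>a. inv\<^bsub>G\<^esub> a)"

definition haar_probability :: "('s, 'm) monoid_scheme \<Rightarrow> 's topology \<Rightarrow> 's measure \<Rightarrow> bool" where
  "haar_probability G T mu \<longleftrightarrow> prob_space mu \<and> sets mu = sets (borel_of T)
     \<and> space mu = topspace T
     \<and> (\<forall>s\<in>carrier G. \<forall>A\<in>sets mu. (\<lambda>a. s \<otimes>\<^bsub>G\<^esub> a) ` A \<in> sets mu
            \<and> emeasure mu ((\<lambda>a. s \<otimes>\<^bsub>G\<^esub> a) ` A) = emeasure mu A)"

definition measurable_action ::
  "('s, 'm) monoid_scheme \<Rightarrow> 's measure \<Rightarrow> ('s \<Rightarrow> 'x::topological_space \<Rightarrow> 'x) \<Rightarrow> bool" where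
  "measurable_action G mu T \<longleftrightarrow>
     (\<forall>x. T \<one>\<^bsub>G\<^esub> x = x)
     \<and> (\<forall>s\<in>carrier G. \<forall>t\<in>carrier G. \<forall>x. T (s \<otimes>\<^bsub>G\<^esub> t) x = T s (T t x))
     \<and> (\<lambda>(s, x). T s x) \<in> measurable (mu \<Otimes>\<^sub>M (borel :: 'x measure)) borel"

definition symmetrize :: "'s measure \<Rightarrow> ('s \<Rightarrow> 'x \<Rightarrow> 'x) \<Rightarrow> ('x \<Rightarrow> real) \<Rightarrow> ('x \<Rightarrow> real)" where
  "symmetrize mu T g = (\<lambda>x. \<integral>s. g (T s x) \<partial>mu)"

definition invariant_part :: "('s, 'm) monoid_scheme \<Rightarrow> ('s \<Rightarrow> 'x \<Rightarrow> 'x) \<Rightarrow> ('x \<Rightarrow> real) set \<Rightarrow> ('x \<Rightarrow> real) set" where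
  "invariant_part G T \<Gamma> = {g \<in> \<Gamma>. \<forall>s\<in>carrier G. g \<circ> T s = g}"

definition invariant_prob_measures ::
  "('s, 'm) monoid_scheme \<Rightarrow> ('s \<Rightarrow> 'x::topological_space \<Rightarrow> 'x) \<Rightarrow> 'x measure set" where
  "invariant_prob_measures G T =
     {P \<in> prob_measures. \<forall>s\<in>carrier G. distr P (borel :: 'x measure) (T s) = P}"

definition sigma_strictly_admissible ::
  "('s, 'm) monoid_scheme \<Rightarrow> ('s \<Rightarrow> 'x::topological_space \<Rightarrow> 'x) \<Rightarrow> ('x \<Rightarrow> real) set \<Rightarrow> bool" where
  "sigma_strictly_admissible G T \<Gamma> \<longleftrightarrow> admissible \<Gamma>
     \<and> (\<forall>g\<in>\<Gamma>. \<forall>s\<in>carrier G. g \<circ> T s = g)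
     \<and> (\<exists>\<Psi>. \<Psi> \<subseteq> Cb \<and> determining (invariant_prob_measures G T) \<Psi> \<and>
        (\<forall>\<psi>\<in>\<Psi>. \<exists>c \<epsilon>. \<epsilon> > 0 \<and> (\<lambda>x. c + \<epsilon> * \<psi> x) \<in> \<Gamma> \<and> (\<lambda>x. c - \<epsilon> * \<psi> x) \<in> \<Gamma>))"

end

theory Submission imports Defs begin

locale haar_ctx =
  fixes G (structure) and mu :: "'s measure" and T :: "'s \<Rightarrow> 'x::topological_space \<Rightarrow> 'x"
  assumes grp: "group G" and prob: "prob_space mu" and sp: "space mu = carrier G"
   and linv: "\<forall>s\<in>carrier G. \<forall>A\<in>sets mu. (\<lambda>a. s \<otimes> a) ` A \<in> sets mu
            \<and> emeasure mu ((\<lambda>a. s \<otimes> a) ` A) = emeasure mu A"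
   and invm: "(\<lambda>a. inv a) \<in> measurable mu mu"
   and act: "measurable_action G mu T"
begin

interpretation group G by (rule grp)
interpretation P: prob_space mu by (rule prob)
interpretation PP: pair_prob_space mu mu by unfold_locales

lemma lmult_meas:
  assumes u: "u \<in> carrier G"
  shows "(\<lambda>s. u \<otimes> s) \<in> measurable mu mu"
proof (rule measurableI)
  fix x assume "x \<in> space mu" thus "u \<otimes> x \<in> space mu" using u sp by auto
next
  fix A assume A: "A \<in> sets mu"
  hence Asub: "A \<subseteq> carrier G" using sets.sets_into_space sp by blast
  have "(\<lambda>s. u \<otimes> s) -` A \<inter> space mu = (\<lambda>a. inv u \<otimes> a) ` A"
  proof (intro Set.set_eqI iffI)
    fix s assume "s \<in> (\<lambda>s. u \<otimes> s) -` A \<inter> space mu"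
    hence s: "s \<in> carrier G" "u \<otimes> s \<in> A" using sp by auto
    hence "s = inv u \<otimes> (u \<otimes> s)" using u by (simp add: m_assoc[symmetric])
    thus "s \<in> (\<lambda>a. inv u \<otimes> a) ` A" using s by blast
  next
    fix s assume "s \<in> (\<lambda>a. inv u \<otimes> a) ` A"
    then obtain a where a: "a \<in> A" "s = inv u \<otimes> a" by blast
    hence "a \<in> carrier G" using Asub by auto
    thus "s \<in> (\<lambda>s. u \<otimes> s) -` A \<inter> space mu" using a u sp by (simp add: m_assoc[symmetric])
  qed
  thus "(\<lambda>s. u \<otimes> s) -` A \<inter> space mu \<in> sets mu" using linv A u by auto
qed

lemma distr_lmult:
  assumes u: "u \<in> carrier G"
  shows "distr mu mu (\<lambda>s. u \<otimes> s) = mu"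
proof (rule measure_eqI)
  show "sets (distr mu mu (\<lambda>s. u \<otimes> s)) = sets mu" by simp
next
  fix A assume "A \<in> sets (distr mu mu (\<lambda>s. u \<otimes> s))"
  hence A: "A \<in> sets mu" by simp
  hence Asub: "A \<subseteq> carrier G" using sets.sets_into_space sp by blast
  have "(\<lambda>s. u \<otimes> s) -` A \<inter> space mu = (\<lambda>a. inv u \<otimes> a) ` A"
  proof (intro Set.set_eqI iffI)
    fix s assume "s \<in> (\<lambda>s. u \<otimes> s) -` A \<inter> space mu"
    hence s: "s \<in> carrier G" "u \<otimes> s \<in> A" using sp by auto
    hence "s = inv u \<otimes> (u \<otimes> s)" using u by (simp add: m_assoc[symmetric])
    thus "s \<in> (\<lambda>a. inv u \<otimes> a) ` A" using s by blast
  next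
    fix s assume "s \<in> (\<lambda>a. inv u \<otimes> a) ` A"
    then obtain a where a: "a \<in> A" "s = inv u \<otimes> a" by blast
    hence "a \<in> carrier G" using Asub by auto
    thus "s \<in> (\<lambda>s. u \<otimes> s) -` A \<inter> space mu" using a u sp by (simp add: m_assoc[symmetric])
  qed
  thus "emeasure (distr mu mu (\<lambda>s. u \<otimes> s)) A = emeasure mu A"
    using linv A u by (simp add: emeasure_distr lmult_meas)
qed

lemma integral_lmult:
  fixes f :: "'s \<Rightarrow> real"
  assumes u: "u \<in> carrier G" and f: "f \<in> borel_measurable mu"
  shows "(\<integral>s. f (u \<otimes> s) \<partial>mu) = (\<integral>s. f s \<partial>mu)"
proof -
  have "(\<integral>s. f (u \<otimes> s) \<partial>mu) = integral\<^sup>L (distr mu mu (\<lambda>s. u \<otimes> s)) f"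
    by (rule integral_distr[symmetric, OF lmult_meas[OF u] f])
  thus ?thesis using distr_lmult[OF u] by simp
qed


lemma act_one: "T \<one> x = x" using act unfolding measurable_action_def by auto
lemma act_mult: "s \<in> carrier G \<Longrightarrow> t \<in> carrier G \<Longrightarrow> T (s \<otimes> t) x = T s (T t x)"
  using act unfolding measurable_action_def by auto
lemma TTm: "(\<lambda>(s, x). T s x) \<in> measurable (mu \<Otimes>\<^sub>M (borel :: 'x measure)) borel"
  using act unfolding measurable_action_def by auto

lemma Ty_meas: "(\<lambda>s. T s y) \<in> measurable mu borel"
proof -
  have "(\<lambda>(s, x). T s x) \<circ> (\<lambda>s. (s, y)) \<in> measurable mu borel"
    by (rule measurable_comp[OF measurable_Pair2' TTm]) simp
  thus ?thesis by (simp add: o_def)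
qed

lemma Ts_meas: "s \<in> space mu \<Longrightarrow> T s \<in> measurable borel borel"
proof -
  assume s: "s \<in> space mu"
  have "(\<lambda>(s, x). T s x) \<circ> Pair s \<in> measurable borel borel"
    by (rule measurable_comp[OF measurable_Pair1'[OF s] TTm])
  thus ?thesis by (simp add: o_def)
qed

lemma joint_meas:
  assumes g: "g \<in> borel_measurable (borel :: 'x measure)"
  shows "(\<lambda>(s, t). g (T (inv t) (T s y))) \<in> borel_measurable (mu \<Otimes>\<^sub>M mu)"
proof -
  have m1: "(\<lambda>p. inv (snd p)) \<in> measurable (mu \<Otimes>\<^sub>M mu) mu"
    using measurable_comp[OF measurable_snd invm] by (simp add: o_def)
  have m2: "(\<lambda>p. T (fst p) y) \<in> measurable (mu \<Otimes>\<^sub>M mu) borel"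
    using measurable_comp[OF measurable_fst Ty_meas] by (simp add: o_def)
  have m3: "(\<lambda>p. (inv (snd p), T (fst p) y)) \<in> measurable (mu \<Otimes>\<^sub>M mu) (mu \<Otimes>\<^sub>M borel)"
    by (rule measurable_Pair[OF m1 m2])
  have "g \<circ> (\<lambda>(s, x). T s x) \<circ> (\<lambda>p. (inv (snd p), T (fst p) y)) \<in> borel_measurable (mu \<Otimes>\<^sub>M mu)"
    by (rule measurable_comp[OF m3 measurable_comp[OF TTm g]])
  thus ?thesis by (simp add: o_def case_prod_beta)
qed

lemma claimA:
  fixes g :: "'x \<Rightarrow> real"
  assumes g: "g \<in> borel_measurable borel" and B: "\<And>z. \<bar>g z\<bar> \<le> B"
  shows "(\<integral>s. g (T (inv s) y) \<partial>mu) = (\<integral>s. g (T s y) \<partial>mu)"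
proof -
  define f where "f s = g (T s y)" for s
  have fm: "f \<in> borel_measurable mu" unfolding f_def
    using measurable_comp[OF Ty_meas g] by (simp add: o_def)
  have fim: "(\<lambda>s. f (inv s)) \<in> borel_measurable mu"
    using measurable_comp[OF invm fm] by (simp add: o_def)
  have int: "integrable (mu \<Otimes>\<^sub>M mu) (\<lambda>(s, t). f (inv t \<otimes> s))"
  proof (rule PP.integrable_const_bound[where B=B])
    show "AE x in mu \<Otimes>\<^sub>M mu. norm ((\<lambda>(s, t). f (inv t \<otimes> s)) x) \<le> B"
      using B by (auto simp: f_def)
    have "(\<lambda>(s, t). g (T (inv t) (T s y))) \<in> borel_measurable (mu \<Otimes>\<^sub>M mu)"
      by (rule joint_meas[OF g])
    thus "(\<lambda>(s, t). f (inv t \<otimes> s)) \<in> borel_measurable (mu \<Otimes>\<^sub>M mu)"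
      by (rule measurable_cong[THEN iffD1, rotated])
         (auto simp: f_def space_pair_measure sp act_mult)
  qed
  have "(\<integral>s. f s \<partial>mu) = (\<integral>t. (\<integral>s. f (inv t \<otimes> s) \<partial>mu) \<partial>mu)"
  proof -
    have "(\<integral>t. (\<integral>s. f (inv t \<otimes> s) \<partial>mu) \<partial>mu) = (\<integral>t. (\<integral>s. f s \<partial>mu) \<partial>mu)"
      by (rule Bochner_Integration.integral_cong) (auto simp: sp integral_lmult fm)
    thus ?thesis by (simp add: P.prob_space)
  qed
  also have "\<dots> = (\<integral>s. (\<integral>t. f (inv t \<otimes> s) \<partial>mu) \<partial>mu)"
    using PP.Fubini_integral[of "\<lambda>s t. f (inv t \<otimes> s)"] int by simp
  also have "\<dots> = (\<integral>s. (\<integral>t. f (inv t) \<partial>mu) \<partial>mu)"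
  proof (rule Bochner_Integration.integral_cong)
    fix s assume s: "s \<in> space mu"
    have "(\<integral>t. f (inv t \<otimes> s) \<partial>mu) = (\<integral>t. (\<lambda>t. f (inv t)) (inv s \<otimes> t) \<partial>mu)"
      by (rule Bochner_Integration.integral_cong) (use s in \<open>auto simp: sp inv_mult_group\<close>)
    also have "\<dots> = (\<integral>t. f (inv t) \<partial>mu)"
      by (rule integral_lmult) (use s fim in \<open>auto simp: sp\<close>)
    finally show "(\<integral>t. f (inv t \<otimes> s) \<partial>mu) = (\<integral>t. f (inv t) \<partial>mu)" .
  qed simp
  also have "\<dots> = (\<integral>t. f (inv t) \<partial>mu)" by (simp add: P.prob_space)
  finally show ?thesis unfolding f_def by simp
qed

lemma sym_invariant:
  fixes g :: "'x \<Rightarrow> real"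
  assumes g: "g \<in> borel_measurable borel" and B: "\<And>z. \<bar>g z\<bar> \<le> B" and t0: "t0 \<in> carrier G"
  shows "symmetrize mu T g (T t0 x) = symmetrize mu T g x"
proof -
  have fim: "(\<lambda>s. g (T (inv s) x)) \<in> borel_measurable mu"
    using measurable_comp[OF invm measurable_comp[OF Ty_meas g]] by (simp add: o_def)
  have "symmetrize mu T g (T t0 x) = (\<integral>s. g (T s (T t0 x)) \<partial>mu)" by (simp add: symmetrize_def)
  also have "\<dots> = (\<integral>s. g (T (inv s) (T t0 x)) \<partial>mu)" by (rule claimA[OF g B, symmetric])
  also have "\<dots> = (\<integral>s. (\<lambda>s. g (T (inv s) x)) (inv t0 \<otimes> s) \<partial>mu)"
    by (rule Bochner_Integration.integral_cong) (use t0 in \<open>auto simp: sp inv_mult_group act_mult\<close>)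
  also have "\<dots> = (\<integral>s. g (T (inv s) x) \<partial>mu)"
    by (rule integral_lmult) (use t0 fim in auto)
  also have "\<dots> = (\<integral>s. g (T s x) \<partial>mu)" by (rule claimA[OF g B])
  finally show ?thesis by (simp add: symmetrize_def)
qed


lemma sym_affine:
  fixes g :: "'x \<Rightarrow> real"
  assumes g: "g \<in> borel_measurable borel" and B: "\<And>z. \<bar>g z\<bar> \<le> B"
  shows "symmetrize mu T (\<lambda>x. c + e * g x) = (\<lambda>x. c + e * symmetrize mu T g x)"
proof
  fix x
  have m: "(\<lambda>s. g (T s x)) \<in> borel_measurable mu"
    using measurable_comp[OF Ty_meas g] by (simp add: o_def)
  have i: "integrable mu (\<lambda>s. g (T s x))"
    by (rule P.integrable_const_bound[where B=B]) (use B m in auto)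
  show "symmetrize mu T (\<lambda>x. c + e * g x) x = c + e * symmetrize mu T g x"
    unfolding symmetrize_def using i by (simp add: P.prob_space)
qed

lemma sym_bounded:
  fixes g :: "'x \<Rightarrow> real"
  assumes g: "g \<in> borel_measurable borel" and B: "\<And>z. \<bar>g z\<bar> \<le> B"
  shows "\<bar>symmetrize mu T g x\<bar> \<le> B"
proof -
  have m: "(\<lambda>s. g (T s x)) \<in> borel_measurable mu"
    using measurable_comp[OF Ty_meas g] by (simp add: o_def)
  have i: "integrable mu (\<lambda>s. g (T s x))"
    by (rule P.integrable_const_bound[where B=B]) (use B m in auto)
  have "\<bar>\<integral>s. g (T s x) \<partial>mu\<bar> \<le> (\<integral>s. \<bar>g (T s x)\<bar> \<partial>mu)"
    by (rule integral_abs_bound)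
  also have "\<dots> \<le> (\<integral>s. B \<partial>mu)"
    by (rule integral_mono) (use i B in auto)
  also have "\<dots> = B" by (simp add: P.prob_space)
  finally show ?thesis by (simp add: symmetrize_def)
qed

lemma sym_expect:
  fixes g :: "'x \<Rightarrow> real"
  assumes g: "g \<in> borel_measurable borel" and B: "\<And>z. \<bar>g z\<bar> \<le> B"
    and Pp: "prob_space P" and Ps: "sets P = sets (borel :: 'x measure)"
    and Pinv: "\<forall>s\<in>carrier G. distr P borel (T s) = P"
  shows "(\<integral>x. symmetrize mu T g x \<partial>P) = (\<integral>x. g x \<partial>P)"
proof -
  interpret Q: prob_space P by (rule Pp)
  interpret MP: pair_prob_space mu P by unfold_locales
  have jm: "(\<lambda>(s, x). g (T s x)) \<in> borel_measurable (mu \<Otimes>\<^sub>M P)"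
  proof -
    have "g \<circ> (\<lambda>(s, x). T s x) \<in> borel_measurable (mu \<Otimes>\<^sub>M borel)"
      by (rule measurable_comp[OF TTm g])
    moreover have "sets (mu \<Otimes>\<^sub>M P) = sets (mu \<Otimes>\<^sub>M borel)"
      by (rule sets_pair_measure_cong) (simp_all add: Ps)
    moreover have "g \<circ> (\<lambda>(s, x). T s x) = (\<lambda>(s, x). g (T s x))" by auto
    ultimately show ?thesis
      using measurable_cong_sets[OF _ refl, of "mu \<Otimes>\<^sub>M P" "mu \<Otimes>\<^sub>M borel" borel] by metis
  qed
  have int: "integrable (mu \<Otimes>\<^sub>M P) (\<lambda>(s, x). g (T s x))"
    by (rule MP.integrable_const_bound[where B=B]) (use B jm in \<open>auto simp: case_prod_beta\<close>)
  have "(\<integral>x. symmetrize mu T g x \<partial>P) = (\<integral>x. (\<integral>s. g (T s x) \<partial>mu) \<partial>P)"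
    by (simp add: symmetrize_def)
  also have "\<dots> = (\<integral>s. (\<integral>x. g (T s x) \<partial>P) \<partial>mu)"
    using MP.Fubini_integral[of "\<lambda>s x. g (T s x)"] int by simp
  also have "\<dots> = (\<integral>s. (\<integral>x. g x \<partial>P) \<partial>mu)"
  proof (rule Bochner_Integration.integral_cong)
    fix s assume s: "s \<in> space mu"
    have Tm: "T s \<in> measurable P borel"
      by (subst measurable_cong_sets[OF Ps refl]) (rule Ts_meas[OF s])
    have "(\<integral>x. g (T s x) \<partial>P) = integral\<^sup>L (distr P borel (T s)) g"
      by (rule integral_distr[symmetric, OF Tm g])
    also have "\<dots> = (\<integral>x. g x \<partial>P)" using Pinv s sp by simp
    finally show "(\<integral>x. g (T s x) \<partial>P) = (\<integral>x. g x \<partial>P)" .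
  qed simp
  also have "\<dots> = (\<integral>x. g x \<partial>P)" by (simp add: P.prob_space)
  finally show ?thesis .
qed

end


lemma Cb_facts:
  assumes "g \<in> Cb"
  shows "g \<in> borel_measurable borel" "\<exists>B. \<forall>z. \<bar>g z\<bar> \<le> B"
proof -
  have c: "continuous_on UNIV g" and b: "bounded (range g)" using assms unfolding Cb_def by auto
  show "g \<in> borel_measurable borel" by (rule borel_measurable_continuous_onI[OF c])
  from b obtain a where "\<forall>y\<in>range g. norm y \<le> a" unfolding bounded_iff by blast
  thus "\<exists>B. \<forall>z. \<bar>g z\<bar> \<le> B" by auto
qed

lemma fsm_return: "finite_signed_measure (return borel a, return borel b)"
proof -
  have "finite_measure (return borel a)" "finite_measure (return borel b)"
    by (rule prob_space.finite_measure, rule prob_space_return, simp)+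
  thus ?thesis unfolding finite_signed_measure_def finite_borel_measure_def by simp
qed

lemma MX_basis:
  assumes "finite_signed_measure nu" "open U"
  shows "{g \<in> Cb. signed_integral nu g \<in> U} \<in> {{g \<in> Cb. signed_integral nu g \<in> U} | nu U. finite_signed_measure nu \<and> open U}"
  using assms by blast

lemma topspace_MX: "topspace MX_topology = Cb"
proof -
  let ?S = "{{g \<in> Cb. signed_integral nu g \<in> U} | nu U. finite_signed_measure nu \<and> open U}"
  have "{g \<in> Cb. signed_integral (return borel undefined, return borel undefined) g \<in> (UNIV::real set)} \<in> ?S"
    by (rule MX_basis[OF fsm_return open_UNIV])
  hence "Cb \<in> ?S" by simp
  hence "Cb \<subseteq> \<Union>?S" by blast
  moreover have "\<Union>?S \<subseteq> Cb" by blast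
  ultimately show ?thesis unfolding MX_topology_def topology_generated_by_topspace by blast
qed

lemma closed_C: "closedin MX_topology {h \<in> Cb. h a = h b}"
proof -
  define nu where "nu = (return borel a, return borel b)"
  define Ov where "Ov = {h \<in> Cb. signed_integral nu h \<in> - {0}}"
  have "openin MX_topology Ov" unfolding MX_topology_def Ov_def
    by (rule topology_generated_by_Basis, rule MX_basis) (simp_all add: nu_def fsm_return open_Compl)
  moreover have eq: "{h \<in> Cb. h a = h b} = topspace MX_topology - Ov"
  proof -
    have "signed_integral nu h = h a - h b" if "h \<in> Cb" for h
      using Cb_facts(1)[OF that] unfolding signed_integral_def nu_def by (simp add: integral_return)
    thus ?thesis unfolding topspace_MX Ov_def by auto
  qed
  moreover have "Ov \<subseteq> topspace MX_topology" unfolding topspace_MX Ov_def by blast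
  ultimately show ?thesis unfolding closedin_def
    by (simp add: Diff_Diff_Int inf.absorb2)
qed

lemma invm_lemma:
  fixes G :: "('s, 'm) monoid_scheme" and TS :: "'s topology" and mu :: "'s measure"
  assumes grp: "group G" and top: "topspace TS = carrier G"
    and cinv: "continuous_map TS TS (\<lambda>a. inv\<^bsub>G\<^esub> a)"
    and msets: "sets mu = sets (borel_of TS)"
  shows "(\<lambda>a. inv\<^bsub>G\<^esub> a) \<in> measurable mu mu"
proof -
  have eq: "measurable mu mu = measurable (borel_of TS) (borel_of TS)"
    by (rule measurable_cong_sets) (simp_all add: msets)
  have sub: "{U. openin TS U} \<subseteq> Pow (topspace TS)" using openin_subset by blast
  have spS: "space (sigma (topspace TS) {U. openin TS U}) = topspace TS"
    by (rule space_measure_of[OF sub])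
  have "(\<lambda>a. inv\<^bsub>G\<^esub> a) \<in> measurable (borel_of TS) (borel_of TS)"
    unfolding borel_of_def
  proof (rule measurable_measure_of[OF sub])
    show "(\<lambda>a. inv\<^bsub>G\<^esub> a) \<in> space (sigma (topspace TS) {U. openin TS U}) \<rightarrow> topspace TS"
    proof -
      have "(\<lambda>a. inv\<^bsub>G\<^esub> a) \<in> topspace TS \<rightarrow> topspace TS"
        using top group.inv_closed[OF grp] by auto
      thus ?thesis unfolding spS .
    qed
  next
    fix U assume "U \<in> {U. openin TS U}"
    hence U: "openin TS U" by simp
    have o: "openin TS {x \<in> topspace TS. inv\<^bsub>G\<^esub> x \<in> U}"
      by (rule openin_continuous_map_preimage[OF cinv U])
    have e: "(\<lambda>a. inv\<^bsub>G\<^esub> a) -` U \<inter> space (sigma (topspace TS) {U. openin TS U})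
          = {x \<in> topspace TS. inv\<^bsub>G\<^esub> x \<in> U}"
      unfolding spS by blast
    show "(\<lambda>a. inv\<^bsub>G\<^esub> a) -` U \<inter> space (sigma (topspace TS) {U. openin TS U})
          \<in> sets (sigma (topspace TS) {U. openin TS U})"
      unfolding e sets_measure_of[OF sub] using o by (intro sigma_sets.Basic) simp
  qed
  thus ?thesis using eq by simp
qed

theorem lemma4:
  fixes G :: "('s, 'm) monoid_scheme"
    and TS :: "'s topology"
    and mu :: "'s measure"
    and T :: "'s \<Rightarrow> 'x::polish_space \<Rightarrow> 'x"
    and \<Gamma> :: "('x \<Rightarrow> real) set"
  assumes "compact_hausdorff_group G TS"
    and "haar_probability G TS mu"
    and "measurable_action G mu T"
    and "\<Gamma> \<subseteq> Cb"
  shows "(admissible \<Gamma> \<longrightarrow> admissible (invariant_part G T \<Gamma>))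
    \<and> (strictly_admissible \<Gamma> \<and> symmetrize mu T ` \<Gamma> \<subseteq> \<Gamma>
         \<longrightarrow> sigma_strictly_admissible G T (invariant_part G T \<Gamma>))"
proof -
  have grp: "group G" and top: "topspace TS = carrier G"
    and cinv: "continuous_map TS TS (\<lambda>a. inv\<^bsub>G\<^esub> a)"
    using assms(1) unfolding compact_hausdorff_group_def by auto
  have prob: "prob_space mu" and msets: "sets mu = sets (borel_of TS)" and msp: "space mu = topspace TS"
    and linv: "\<forall>s\<in>carrier G. \<forall>A\<in>sets mu. (\<lambda>a. s \<otimes>\<^bsub>G\<^esub> a) ` A \<in> sets mu
            \<and> emeasure mu ((\<lambda>a. s \<otimes>\<^bsub>G\<^esub> a) ` A) = emeasure mu A"
    using assms(2) unfolding haar_probability_def by auto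
  have invm: "(\<lambda>a. inv\<^bsub>G\<^esub> a) \<in> measurable mu mu"
    by (rule invm_lemma[OF grp top cinv msets])
  interpret H: haar_ctx G mu T
  proof -
    have sp: "space mu = carrier G" using msp top by simp
    show "haar_ctx G mu T" by (rule haar_ctx.intro[OF grp prob sp linv invm assms(3)])
  qed

  have part1: "admissible (invariant_part G T \<Gamma>)" if adm: "admissible \<Gamma>"
  proof -
    have closed: "closedin MX_topology \<Gamma>" and zero: "(\<lambda>x. 0) \<in> \<Gamma>"
      and conv: "\<forall>g1\<in>\<Gamma>. \<forall>g2\<in>\<Gamma>. \<forall>t::real. 0 \<le> t \<and> t \<le> 1 \<longrightarrow> (\<lambda>x. t * g1 x + (1 - t) * g2 x) \<in> \<Gamma>"
      using adm unfolding admissible_def by auto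
    have eq: "invariant_part G T \<Gamma> = \<Inter> (insert \<Gamma> {{h \<in> Cb. h (T s x) = h x} | s x. s \<in> carrier G})"
    proof (intro Set.set_eqI iffI)
      fix g assume "g \<in> invariant_part G T \<Gamma>"
      hence g: "g \<in> \<Gamma>" "\<And>s x. s \<in> carrier G \<Longrightarrow> g (T s x) = g x"
        unfolding invariant_part_def by (auto simp: fun_eq_iff)
      have "g \<in> Cb" using g(1) assms(4) by blast
      thus "g \<in> \<Inter> (insert \<Gamma> {{h \<in> Cb. h (T s x) = h x} | s x. s \<in> carrier G})"
        using g by blast
    next
      fix g assume g: "g \<in> \<Inter> (insert \<Gamma> {{h \<in> Cb. h (T s x) = h x} | s x. s \<in> carrier G})"
      have "g \<in> \<Gamma>" using g by blast
      moreover have "g (T s x) = g x" if "s \<in> carrier G" for s x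
        using g that by blast
      ultimately show "g \<in> invariant_part G T \<Gamma>"
        unfolding invariant_part_def by (auto simp: fun_eq_iff)
    qed
    have cl: "closedin MX_topology (invariant_part G T \<Gamma>)"
      unfolding eq by (rule closedin_Inter) (use closed closed_C in auto)
    show ?thesis unfolding admissible_def
    proof (intro conjI ballI allI impI)
      show "invariant_part G T \<Gamma> \<subseteq> Cb" using assms(4) unfolding invariant_part_def by auto
      show "(\<lambda>x. 0) \<in> invariant_part G T \<Gamma>" using zero unfolding invariant_part_def by auto
      show "closedin MX_topology (invariant_part G T \<Gamma>)" by (rule cl)
      fix g1 g2 and t :: real
      assume g1: "g1 \<in> invariant_part G T \<Gamma>" and g2: "g2 \<in> invariant_part G T \<Gamma>" and t: "0 \<le> t \<and> t \<le> 1"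
      show "(\<lambda>x. t * g1 x + (1 - t) * g2 x) \<in> invariant_part G T \<Gamma>"
      proof -
        have a: "g1 \<in> \<Gamma>" "g2 \<in> \<Gamma>" "\<And>s x. s \<in> carrier G \<Longrightarrow> g1 (T s x) = g1 x"
          "\<And>s x. s \<in> carrier G \<Longrightarrow> g2 (T s x) = g2 x"
          using g1 g2 unfolding invariant_part_def by (auto simp: fun_eq_iff)
        have "(\<lambda>x. t * g1 x + (1 - t) * g2 x) \<in> \<Gamma>" using conv a(1,2) t by blast
        thus ?thesis unfolding invariant_part_def using a(3,4) by (simp add: fun_eq_iff)
      qed
    qed
  qed

  have part2: "sigma_strictly_admissible G T (invariant_part G T \<Gamma>)"
    if sadm: "strictly_admissible \<Gamma>" and symG: "symmetrize mu T ` \<Gamma> \<subseteq> \<Gamma>"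
  proof -
    have adm: "admissible \<Gamma>" using sadm unfolding strictly_admissible_def by auto
    obtain \<Psi> where \<Psi>Cb: "\<Psi> \<subseteq> Cb" and det: "determining prob_measures \<Psi>"
      and ce: "\<forall>\<psi>\<in>\<Psi>. \<exists>c \<epsilon>. \<epsilon> > 0 \<and> (\<lambda>x. c + \<epsilon> * \<psi> x) \<in> \<Gamma> \<and> (\<lambda>x. c - \<epsilon> * \<psi> x) \<in> \<Gamma>"
      using sadm unfolding strictly_admissible_def by auto
    have key: "symmetrize mu T \<psi> \<in> Cb \<and> (\<exists>c \<epsilon>. \<epsilon> > 0
         \<and> (\<lambda>x. c + \<epsilon> * symmetrize mu T \<psi> x) \<in> invariant_part G T \<Gamma>
         \<and> (\<lambda>x. c - \<epsilon> * symmetrize mu T \<psi> x) \<in> invariant_part G T \<Gamma>)" if psi: "\<psi> \<in> \<Psi>" for \<psi>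
    proof -
      obtain c \<epsilon> where e: "\<epsilon> > 0" and gp: "(\<lambda>x. c + \<epsilon> * \<psi> x) \<in> \<Gamma>" and gm: "(\<lambda>x. c - \<epsilon> * \<psi> x) \<in> \<Gamma>"
        using ce psi by blast
      have pm: "\<psi> \<in> borel_measurable borel" using Cb_facts(1) \<Psi>Cb psi by blast
      obtain B where B: "\<And>z. \<bar>\<psi> z\<bar> \<le> B" using Cb_facts(2) \<Psi>Cb psi by blast
      have Sp: "symmetrize mu T (\<lambda>x. c + \<epsilon> * \<psi> x) = (\<lambda>x. c + \<epsilon> * symmetrize mu T \<psi> x)"
        by (rule H.sym_affine[OF pm B])
      have Sm: "symmetrize mu T (\<lambda>x. c + (- \<epsilon>) * \<psi> x) = (\<lambda>x. c + (- \<epsilon>) * symmetrize mu T \<psi> x)"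
        by (rule H.sym_affine[OF pm B])
      have inG_p: "(\<lambda>x. c + \<epsilon> * symmetrize mu T \<psi> x) \<in> \<Gamma>" using symG gp Sp by (metis image_subset_iff)
      have inG_m: "(\<lambda>x. c - \<epsilon> * symmetrize mu T \<psi> x) \<in> \<Gamma>"
      proof -
        have "symmetrize mu T (\<lambda>x. c - \<epsilon> * \<psi> x) \<in> \<Gamma>" using symG gm by blast
        moreover have "symmetrize mu T (\<lambda>x. c - \<epsilon> * \<psi> x) = (\<lambda>x. c - \<epsilon> * symmetrize mu T \<psi> x)"
          using Sm by simp
        ultimately show ?thesis by simp
      qed
      have gpm: "(\<lambda>x. c + \<epsilon> * \<psi> x) \<in> borel_measurable borel" using pm by measurable
      have gmm: "(\<lambda>x. c + (- \<epsilon>) * \<psi> x) \<in> borel_measurable borel" using pm by measurable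
      have gpB: "\<bar>c + \<epsilon> * \<psi> z\<bar> \<le> \<bar>c\<bar> + \<epsilon> * B" for z
      proof -
        have "\<bar>\<epsilon> * \<psi> z\<bar> \<le> \<epsilon> * B" using B[of z] e by (simp add: abs_mult)
        thus ?thesis by linarith
      qed
      have gmB: "\<bar>c + (- \<epsilon>) * \<psi> z\<bar> \<le> \<bar>c\<bar> + \<epsilon> * B" for z
      proof -
        have "\<bar>\<epsilon> * \<psi> z\<bar> \<le> \<epsilon> * B" using B[of z] e by (simp add: abs_mult)
        thus ?thesis by (simp only: mult_minus_left)
      qed
      have invp: "(\<lambda>x. c + \<epsilon> * symmetrize mu T \<psi> x) \<circ> T s = (\<lambda>x. c + \<epsilon> * symmetrize mu T \<psi> x)"
        if s: "s \<in> carrier G" for s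
        using H.sym_invariant[OF gpm gpB s] unfolding Sp by (auto simp: fun_eq_iff)
      have invm': "(\<lambda>x. c - \<epsilon> * symmetrize mu T \<psi> x) \<circ> T s = (\<lambda>x. c - \<epsilon> * symmetrize mu T \<psi> x)"
        if s: "s \<in> carrier G" for s
        using H.sym_invariant[OF gmm gmB s] unfolding Sm by (auto simp: fun_eq_iff)
      have SCb: "symmetrize mu T \<psi> \<in> Cb"
      proof -
        have "(\<lambda>x. c + \<epsilon> * symmetrize mu T \<psi> x) \<in> Cb" using inG_p assms(4) by auto
        hence cp: "continuous_on UNIV (\<lambda>x. c + \<epsilon> * symmetrize mu T \<psi> x)" unfolding Cb_def by auto
        have "continuous_on UNIV (\<lambda>x. ((c + \<epsilon> * symmetrize mu T \<psi> x) - c) / \<epsilon>)"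
          by (intro continuous_intros cp) (use e in auto)
        moreover have "(\<lambda>x. ((c + \<epsilon> * symmetrize mu T \<psi> x) - c) / \<epsilon>) = symmetrize mu T \<psi>"
          using e by (auto simp: fun_eq_iff)
        ultimately have "continuous_on UNIV (symmetrize mu T \<psi>)" by metis
        moreover have "bounded (range (symmetrize mu T \<psi>))"
          unfolding bounded_iff using H.sym_bounded[OF pm B] by auto
        ultimately show ?thesis unfolding Cb_def by auto
      qed
      have m1: "(\<lambda>x. c + \<epsilon> * symmetrize mu T \<psi> x) \<in> invariant_part G T \<Gamma>"
        unfolding invariant_part_def using inG_p invp by blast
      have m2: "(\<lambda>x. c - \<epsilon> * symmetrize mu T \<psi> x) \<in> invariant_part G T \<Gamma>"
        unfolding invariant_part_def using inG_m invm' by blast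
      show ?thesis
        by (rule conjI[OF SCb], rule exI[of _ c], rule exI[of _ \<epsilon>]) (simp add: e m1 m2)
    qed
    show ?thesis unfolding sigma_strictly_admissible_def
    proof (intro conjI)
      show "admissible (invariant_part G T \<Gamma>)" by (rule part1[OF adm])
      show "\<forall>g\<in>invariant_part G T \<Gamma>. \<forall>s\<in>carrier G. g \<circ> T s = g"
        unfolding invariant_part_def by auto
      show "\<exists>\<Psi>'. \<Psi>' \<subseteq> Cb \<and> determining (invariant_prob_measures G T) \<Psi>' \<and>
        (\<forall>\<psi>\<in>\<Psi>'. \<exists>c \<epsilon>. \<epsilon> > 0 \<and> (\<lambda>x. c + \<epsilon> * \<psi> x) \<in> invariant_part G T \<Gamma>
             \<and> (\<lambda>x. c - \<epsilon> * \<psi> x) \<in> invariant_part G T \<Gamma>)"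
      proof (intro exI[of _ "symmetrize mu T ` \<Psi>"] conjI)
        show "symmetrize mu T ` \<Psi> \<subseteq> Cb"
        proof
          fix \<phi> assume "\<phi> \<in> symmetrize mu T ` \<Psi>"
          then obtain \<psi> where "\<psi> \<in> \<Psi>" "\<phi> = symmetrize mu T \<psi>" by blast
          thus "\<phi> \<in> Cb" using key[of \<psi>] by simp
        qed
        show "\<forall>\<psi>\<in>symmetrize mu T ` \<Psi>. \<exists>c \<epsilon>. \<epsilon> > 0 \<and> (\<lambda>x. c + \<epsilon> * \<psi> x) \<in> invariant_part G T \<Gamma>
             \<and> (\<lambda>x. c - \<epsilon> * \<psi> x) \<in> invariant_part G T \<Gamma>"
        proof
          fix \<phi> assume "\<phi> \<in> symmetrize mu T ` \<Psi>"
          then obtain \<psi> where "\<psi> \<in> \<Psi>" "\<phi> = symmetrize mu T \<psi>" by blast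
          thus "\<exists>c \<epsilon>. \<epsilon> > 0 \<and> (\<lambda>x. c + \<epsilon> * \<phi> x) \<in> invariant_part G T \<Gamma>
             \<and> (\<lambda>x. c - \<epsilon> * \<phi> x) \<in> invariant_part G T \<Gamma>" using key[of \<psi>] by simp
        qed
        show "determining (invariant_prob_measures G T) (symmetrize mu T ` \<Psi>)"
          unfolding determining_def
        proof (intro ballI impI)
          fix P1 P2 assume P1: "P1 \<in> invariant_prob_measures G T" and P2: "P2 \<in> invariant_prob_measures G T"
            and eqS: "\<forall>\<psi>\<in>symmetrize mu T ` \<Psi>. (\<integral>x. \<psi> x \<partial>P1) = (\<integral>x. \<psi> x \<partial>P2)"
          have P1p: "P1 \<in> prob_measures" "\<forall>s\<in>carrier G. distr P1 borel (T s) = P1"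
            using P1 unfolding invariant_prob_measures_def by auto
          have P2p: "P2 \<in> prob_measures" "\<forall>s\<in>carrier G. distr P2 borel (T s) = P2"
            using P2 unfolding invariant_prob_measures_def by auto
          have "(\<integral>x. \<psi> x \<partial>P1) = (\<integral>x. \<psi> x \<partial>P2)" if psi: "\<psi> \<in> \<Psi>" for \<psi>
          proof -
            have pm: "\<psi> \<in> borel_measurable borel" using Cb_facts(1) \<Psi>Cb psi by blast
            obtain B where B: "\<And>z. \<bar>\<psi> z\<bar> \<le> B" using Cb_facts(2) \<Psi>Cb psi by blast
            have "(\<integral>x. \<psi> x \<partial>P1) = (\<integral>x. symmetrize mu T \<psi> x \<partial>P1)"
              using H.sym_expect[OF pm B _ _ P1p(2)] P1p(1) unfolding prob_measures_def by simp
            also have "\<dots> = (\<integral>x. symmetrize mu T \<psi> x \<partial>P2)" using eqS psi by auto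
            also have "\<dots> = (\<integral>x. \<psi> x \<partial>P2)"
              using H.sym_expect[OF pm B _ _ P2p(2)] P2p(1) unfolding prob_measures_def by simp
            finally show ?thesis .
          qed
          thus "P1 = P2" using det P1p(1) P2p(1) unfolding determining_def by blast
        qed
      qed
    qed
  qed
  show ?thesis using part1 part2 by blast
qed

end
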